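(* Let $\gamma_1,\dots,\gamma_n,\beta_1,\dots,\beta_n\in\mathbb{C}$ be non-zero with $\gamma_j=\lambda+i\omega_j$, let $H^5_1,\dots,H^5_n$ be complex polynomials in $u_1,\dots,u_n,\bar u_1,\dots,\bar u_n$ such that for each $k$ the $k$th non-resonance condition of $H^5_k$ holds, and set $P_k:=\widehat{H}^5_k$ (the $k$th modified polynomial of $H^5_k$) and $P=(P_1,\dots,P_n)$. Define $$L^1_k(u):=[P_k\|(\beta_1u_1|u_1|^2,\dots,\beta_nu_n|u_n|^2)](u),\qquad L^2_k(u):=[\beta_ku_k|u_k|^2\|P](u).$$ Then $S_k(u):=L^1_k(u)-L^2_k(u)$ can be expressed as a sum of (complex multiples of) terms of the form $u_k^2\overline{R(u)}$ and $|u_j|^2R(u)$, with $j\in\{1,\dots,n\}$ and $R(u)$ a monomial term appearing in $P_k(u)$.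
   Context: For a monomial $c\,u_1^{s_1}\cdots u_n^{s_n}\bar u_1^{t_1}\cdots\bar u_n^{t_n}$, its $k$th non-resonance condition is $\sum_j s_j\omega_j-\sum_j t_j\omega_j-\omega_k\neq0$; that of a polynomial is the conjunction over its monomial terms. The modified polynomial $\widehat{H}^5_k$ is obtained from $H^5_k$ by dividing each monomial $c\,u^{s}\bar u^{t}$ by $\sum_j s_j\gamma_j+\sum_j t_j\bar\gamma_j-\gamma_k$. The bracket is $[R\|S](u)=\sum_{j}\Big(\frac{\partial R}{\partial u_j}S_j+\frac{\partial R}{\partial\bar u_j}\overline{S_j}\Big)$, treating $u_j,\bar u_j$ as independent variables. *)

theory Defs
  imports Complex_Main
begin

text \<open>Complex polynomials in u_0..u_{n-1}, conj u_0..conj u_{n-1} (indices 0-based),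
  represented by their coefficient function on exponent pairs (s,t):
  the monomial term with exponents (s,t) is  c * prod_j u_j^(s j) * conj(u_j)^(t j).\<close>

type_synonym mono = "(nat \<Rightarrow> nat) \<times> (nat \<Rightarrow> nat)"
type_synonym cpoly = "mono \<Rightarrow> complex"

definition is_poly :: "nat \<Rightarrow> cpoly \<Rightarrow> bool" where
  "is_poly n p \<longleftrightarrow> finite {m. p m \<noteq> 0} \<and>
     (\<forall>s t. p (s, t) \<noteq> 0 \<longrightarrow> (\<forall>j\<ge>n. s j = 0 \<and> t j = 0))"

definition mon_eval :: "nat \<Rightarrow> mono \<Rightarrow> (nat \<Rightarrow> complex) \<Rightarrow> complex" where
  "mon_eval n m u = (\<Prod>j<n. u j ^ fst m j * cnj (u j) ^ snd m j)"

definition peval :: "nat \<Rightarrow> cpoly \<Rightarrow> (nat \<Rightarrow> complex) \<Rightarrow> complex" where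
  "peval n p u = (\<Sum>m\<in>{m. p m \<noteq> 0}. p m * mon_eval n m u)"

definition du :: "nat \<Rightarrow> cpoly \<Rightarrow> cpoly" where
  "du j p = (\<lambda>(s, t). of_nat (s j + 1) * p (s(j := s j + 1), t))"

definition dub :: "nat \<Rightarrow> cpoly \<Rightarrow> cpoly" where
  "dub j p = (\<lambda>(s, t). of_nat (t j + 1) * p (s, t(j := t j + 1)))"

definition bracket :: "nat \<Rightarrow> cpoly \<Rightarrow> (nat \<Rightarrow> cpoly) \<Rightarrow> (nat \<Rightarrow> complex) \<Rightarrow> complex" where
  "bracket n R S u = (\<Sum>j<n. peval n (du j R) u * peval n (S j) u
                            + peval n (dub j R) u * cnj (peval n (S j) u))"

definition nonres :: "nat \<Rightarrow> (nat \<Rightarrow> real) \<Rightarrow> nat \<Rightarrow> cpoly \<Rightarrow> bool" where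
  "nonres n \<omega> k p \<longleftrightarrow> (\<forall>s t. p (s, t) \<noteq> 0 \<longrightarrow>
      (\<Sum>j<n. real (s j) * \<omega> j) - (\<Sum>j<n. real (t j) * \<omega> j) - \<omega> k \<noteq> 0)"

definition modp :: "nat \<Rightarrow> (nat \<Rightarrow> complex) \<Rightarrow> nat \<Rightarrow> cpoly \<Rightarrow> cpoly" where
  "modp n \<gamma> k p = (\<lambda>(s, t). p (s, t) /
      ((\<Sum>j<n. of_nat (s j) * \<gamma> j) + (\<Sum>j<n. of_nat (t j) * cnj (\<gamma> j)) - \<gamma> k))"

definition cubep :: "complex \<Rightarrow> nat \<Rightarrow> cpoly" where
  "cubep b j = (\<lambda>(s, t). if s = (\<lambda>_. 0)(j := 2) \<and> t = (\<lambda>_. 0)(j := 1) then b else 0)"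

end

theory Submission
  imports Defs
begin

lemma mon_shift_s:
  assumes "j < n"
  shows "mon_eval n (s(j := s j + 1), t) u = mon_eval n (s, t) u * u j"
proof -
  have "mon_eval n (s(j := s j + 1), t) u = (\<Prod>i<n. (u i ^ s i * cnj (u i) ^ t i) * (if i = j then u j else 1))"
    unfolding mon_eval_def by (rule prod.cong) auto
  also have "\<dots> = mon_eval n (s, t) u * u j"
    using assms unfolding mon_eval_def by (simp only: prod.distrib prod.delta finite_lessThan) simp
  finally show ?thesis .
qed

lemma mon_shift_t:
  assumes "j < n"
  shows "mon_eval n (s, t(j := t j + 1)) u = mon_eval n (s, t) u * cnj (u j)"
proof -
  have "mon_eval n (s, t(j := t j + 1)) u = (\<Prod>i<n. (u i ^ s i * cnj (u i) ^ t i) * (if i = j then cnj (u j) else 1))"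
    unfolding mon_eval_def by (rule prod.cong) auto
  also have "\<dots> = mon_eval n (s, t) u * cnj (u j)"
    using assms unfolding mon_eval_def by (simp only: prod.distrib prod.delta finite_lessThan) simp
  finally show ?thesis .
qed

lemma upd_inj: "s(j := s j + (1::nat)) = s'(j := s' j + 1) \<Longrightarrow> s = s'"
proof
  fix i assume h: "s(j := s j + (1::nat)) = s'(j := s' j + 1)"
  have "(s(j := s j + 1)) i = (s'(j := s' j + 1)) i" using h by simp
  then show "s i = s' i" by (cases "i = j") auto
qed

lemma du_eval:
  assumes fin: "finite {m. p m \<noteq> 0}" and j: "j < n"
  shows "peval n (du j p) u * u j = (\<Sum>m\<in>{m. p m \<noteq> 0}. of_nat (fst m j) * p m * mon_eval n m u)"
proof -
  define sh :: "mono \<Rightarrow> mono" where "sh = (\<lambda>(s,t). (s(j := s j + 1), t))"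
  define S where "S = {m. p m \<noteq> 0}"
  have inj: "inj sh"
  proof (rule injI)
    fix x y assume "sh x = sh y"
    then show "x = y" unfolding sh_def
      by (cases x; cases y) (auto dest: upd_inj[simplified])
  qed
  have dush: "du j p m = of_nat (fst (sh m) j) * p (sh m)" for m
    unfolding du_def sh_def by (cases m) auto
  have supp: "{m. du j p m \<noteq> 0} = sh -` S"
    unfolding S_def using dush by (auto simp: sh_def split: prod.splits)
  have fin2: "finite (sh -` S)" using fin inj unfolding S_def by (intro finite_vimageI) auto
  have "peval n (du j p) u * u j = (\<Sum>m\<in>sh -` S. du j p m * mon_eval n m u * u j)"
    unfolding peval_def supp by (simp add: sum_distrib_right mult.assoc)
  also have "\<dots> = (\<Sum>m\<in>sh -` S. (\<lambda>m'. of_nat (fst m' j) * p m' * mon_eval n m' u) (sh m))"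
    apply (rule sum.cong[OF refl])
    using j by (auto simp: dush sh_def mon_shift_s[simplified] mult.assoc split: prod.splits)
  also have "\<dots> = (\<Sum>m\<in>sh ` (sh -` S). of_nat (fst m j) * p m * mon_eval n m u)"
    using sum.reindex[of sh "sh -` S" "\<lambda>m'. of_nat (fst m' j) * p m' * mon_eval n m' u"] inj
    by (simp add: inj_on_subset)
  also have "\<dots> = (\<Sum>m\<in>S. of_nat (fst m j) * p m * mon_eval n m u)"
  proof (rule sum.mono_neutral_left)
    show "finite S" using fin S_def by simp
    show "sh ` (sh -` S) \<subseteq> S" by auto
    show "\<forall>i\<in>S - sh ` sh -` S. of_nat (fst i j) * p i * mon_eval n i u = 0"
    proof
      fix m assume m: "m \<in> S - sh ` sh -` S"
      obtain s t where st: "m = (s, t)" by (cases m)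
      show "of_nat (fst m j) * p m * mon_eval n m u = 0"
      proof (cases "s j = 0")
        case False
        have "sh (s(j := s j - 1), t) = m" using False unfolding sh_def st by (auto simp: fun_eq_iff)
        then show ?thesis using m by force
      qed (simp add: st)
    qed
  qed
  finally show ?thesis unfolding S_def .
qed

lemma dub_eval:
  assumes fin: "finite {m. p m \<noteq> 0}" and j: "j < n"
  shows "peval n (dub j p) u * cnj (u j) = (\<Sum>m\<in>{m. p m \<noteq> 0}. of_nat (snd m j) * p m * mon_eval n m u)"
proof -
  define sh :: "mono \<Rightarrow> mono" where "sh = (\<lambda>(s,t). (s, t(j := t j + 1)))"
  define S where "S = {m. p m \<noteq> 0}"
  have inj: "inj sh"
  proof (rule injI)
    fix x y assume "sh x = sh y"
    then show "x = y" unfolding sh_def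
      by (cases x; cases y) (auto dest: upd_inj[simplified])
  qed
  have dush: "dub j p m = of_nat (snd (sh m) j) * p (sh m)" for m
    unfolding dub_def sh_def by (cases m) auto
  have supp: "{m. dub j p m \<noteq> 0} = sh -` S"
    unfolding S_def using dush by (auto simp: sh_def split: prod.splits)
  have fin2: "finite (sh -` S)" using fin inj unfolding S_def by (intro finite_vimageI) auto
  have "peval n (dub j p) u * cnj (u j) = (\<Sum>m\<in>sh -` S. dub j p m * mon_eval n m u * cnj (u j))"
    unfolding peval_def supp by (simp add: sum_distrib_right mult.assoc)
  also have "\<dots> = (\<Sum>m\<in>sh -` S. (\<lambda>m'. of_nat (snd m' j) * p m' * mon_eval n m' u) (sh m))"
    apply (rule sum.cong[OF refl])
    using j by (auto simp: dush sh_def mon_shift_t[simplified] mult.assoc split: prod.splits)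
  also have "\<dots> = (\<Sum>m\<in>sh ` (sh -` S). of_nat (snd m j) * p m * mon_eval n m u)"
    using sum.reindex[of sh "sh -` S" "\<lambda>m'. of_nat (snd m' j) * p m' * mon_eval n m' u"] inj
    by (simp add: inj_on_subset)
  also have "\<dots> = (\<Sum>m\<in>S. of_nat (snd m j) * p m * mon_eval n m u)"
  proof (rule sum.mono_neutral_left)
    show "finite S" using fin S_def by simp
    show "sh ` (sh -` S) \<subseteq> S" by auto
    show "\<forall>i\<in>S - sh ` sh -` S. of_nat (snd i j) * p i * mon_eval n i u = 0"
    proof
      fix m assume m: "m \<in> S - sh ` sh -` S"
      obtain s t where st: "m = (s, t)" by (cases m)
      show "of_nat (snd m j) * p m * mon_eval n m u = 0"
      proof (cases "t j = 0")
        case False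
        have "sh (s, t(j := t j - 1)) = m" using False unfolding sh_def st by (auto simp: fun_eq_iff)
        then show ?thesis using m by force
      qed (simp add: st)
    qed
  qed
  finally show ?thesis unfolding S_def .
qed


lemma peval_single: "peval n (\<lambda>m. if m = m0 then c else 0) u = c * mon_eval n m0 u"
proof (cases "c = 0")
  case False
  then have "{m. (if m = m0 then c else 0) \<noteq> 0} = {m0}" by auto
  then show ?thesis unfolding peval_def by simp
qed (simp add: peval_def)

lemma peval_zero: "peval n (\<lambda>m. 0) u = 0"
  by (simp add: peval_def)

lemma mon_single:
  assumes "k < n"
  shows "mon_eval n ((\<lambda>_. 0)(k := a), (\<lambda>_. 0)(k := b)) u = u k ^ a * cnj (u k) ^ b"
proof -
  have "mon_eval n ((\<lambda>_. 0)(k := a), (\<lambda>_. 0)(k := b)) u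
      = (\<Prod>i<n. if i = k then u k ^ a * cnj (u k) ^ b else 1)"
    unfolding mon_eval_def by (rule prod.cong) auto
  also have "\<dots> = u k ^ a * cnj (u k) ^ b" using assms by simp
  finally show ?thesis .
qed

lemma upd_eq_iff: "(s(k := s k + 1) = ((\<lambda>_. 0::nat)(k := Suc a))) \<longleftrightarrow> s = (\<lambda>_. 0)(k := a)"
proof
  assume h: "s(k := s k + 1) = (\<lambda>_. 0)(k := Suc a)"
  show "s = (\<lambda>_. 0)(k := a)"
  proof
    fix i
    have "(s(k := s k + 1)) i = ((\<lambda>_. 0::nat)(k := Suc a)) i" using h by simp
    then show "s i = ((\<lambda>_. 0)(k := a)) i" by (cases "i = k") auto
  qed
qed auto

lemma upd_neq: "i \<noteq> k \<Longrightarrow> s(i := s i + 1) \<noteq> ((\<lambda>_. 0::nat)(k := a))"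
proof
  assume "i \<noteq> k" "s(i := s i + 1) = (\<lambda>_. 0::nat)(k := a)"
  then have "(s(i := s i + 1)) i = ((\<lambda>_. 0::nat)(k := a)) i" by simp
  with \<open>i \<noteq> k\<close> show False by simp
qed

lemma du_cube_other: "i \<noteq> k \<Longrightarrow> du i (cubep b k) = (\<lambda>m. 0)"
  unfolding du_def cubep_def using upd_neq[of i k _ 2] by (auto simp: fun_eq_iff)

lemma dub_cube_other: "i \<noteq> k \<Longrightarrow> dub i (cubep b k) = (\<lambda>m. 0)"
  unfolding dub_def cubep_def using upd_neq[of i k _ 1] by (auto simp: fun_eq_iff)

lemma du_cube_k: "du k (cubep b k) = (\<lambda>m. if m = ((\<lambda>_. 0)(k := 1), (\<lambda>_. 0)(k := 1)) then 2 * b else 0)"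
  unfolding du_def cubep_def using upd_eq_iff[of _ k 1]
  by (auto simp: fun_eq_iff numeral_2_eq_2)

lemma dub_cube_k: "dub k (cubep b k) = (\<lambda>m. if m = ((\<lambda>_. 0)(k := 2), (\<lambda>_. 0)(k := 0)) then b else 0)"
  unfolding dub_def cubep_def using upd_eq_iff[of _ k 0]
  by (auto simp: fun_eq_iff)

lemma peval_cube: "j < n \<Longrightarrow> peval n (cubep b j) u = b * (u j)^2 * cnj (u j)"
proof -
  assume j: "j < n"
  have "cubep b j = (\<lambda>m. if m = ((\<lambda>_. 0)(j := 2), (\<lambda>_. 0)(j := 1)) then b else 0)"
    unfolding cubep_def by (auto simp: fun_eq_iff)
  then show ?thesis using j by (simp add: peval_single mon_single)
qed

theorem mainTheorem9:
  fixes n k :: nat and lam :: real and \<omega> :: "nat \<Rightarrow> real"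
    and \<beta> \<gamma> :: "nat \<Rightarrow> complex" and H P :: "nat \<Rightarrow> cpoly"
  assumes gamma_def: "\<forall>j<n. \<gamma> j = complex_of_real lam + \<i> * complex_of_real (\<omega> j)"
    and gamma_nz: "\<forall>j<n. \<gamma> j \<noteq> 0"
    and beta_nz: "\<forall>j<n. \<beta> j \<noteq> 0"
    and H_poly: "\<forall>j<n. is_poly n (H j)"
    and H_nonres: "\<forall>j<n. nonres n \<omega> j (H j)"
    and P_def: "\<forall>j<n. P j = modp n \<gamma> j (H j)"
    and k: "k < n"
  shows "\<exists>(a :: mono \<Rightarrow> nat \<Rightarrow> complex) (b :: mono \<Rightarrow> complex). \<forall>u.
           bracket n (P k) (\<lambda>j. cubep (\<beta> j) j) u - bracket n (cubep (\<beta> k) k) P u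
         = (\<Sum>m\<in>{m. P k m \<noteq> 0}.
              b m * (u k)\<^sup>2 * cnj (P k m * mon_eval n m u)
              + (\<Sum>j<n. a m j * complex_of_real ((cmod (u j))\<^sup>2) * (P k m * mon_eval n m u)))"
proof -
  define S where "S = {m. P k m \<noteq> 0}"
  define R where "R (u::nat \<Rightarrow> complex) m = P k m * mon_eval n m u" for u m
  have finH: "finite {m. H k m \<noteq> 0}" using H_poly k unfolding is_poly_def by auto
  have PS: "{m. P k m \<noteq> 0} \<subseteq> {m. H k m \<noteq> 0}"
    using P_def k unfolding modp_def by (auto split: prod.splits)
  have fin: "finite S" unfolding S_def using finite_subset[OF PS finH] .
  define a :: "mono \<Rightarrow> nat \<Rightarrow> complex" where
    "a m j = of_nat (fst m j) * \<beta> j + of_nat (snd m j) * cnj (\<beta> j) - (if j = k then 2 * \<beta> k else 0)" for m j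
  define bb :: "mono \<Rightarrow> complex" where "bb m = - \<beta> k" for m
  show ?thesis
  proof (intro exI[of _ a] exI[of _ bb] allI)
    fix u :: "nat \<Rightarrow> complex"
    define N where "N j = u j * cnj (u j)" for j
    have Nc: "complex_of_real ((cmod (u j))\<^sup>2) = N j" for j
      unfolding N_def by (rule complex_norm_square)
    have PK: "peval n (P k) u = (\<Sum>m\<in>S. R u m)" unfolding peval_def S_def R_def ..
    have L1: "bracket n (P k) (\<lambda>j. cubep (\<beta> j) j) u
        = (\<Sum>j<n. \<Sum>m\<in>S. (of_nat (fst m j) * \<beta> j + of_nat (snd m j) * cnj (\<beta> j)) * N j * R u m)"
      unfolding bracket_def
    proof (rule sum.cong[OF refl])
      fix j assume "j \<in> {..<n}"
      then have j: "j < n" by simp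
      have e1: "peval n (du j (P k)) u * u j = (\<Sum>m\<in>S. of_nat (fst m j) * P k m * mon_eval n m u)"
        using du_eval[OF fin[unfolded S_def] j] unfolding S_def .
      have e2: "peval n (dub j (P k)) u * cnj (u j) = (\<Sum>m\<in>S. of_nat (snd m j) * P k m * mon_eval n m u)"
        using dub_eval[OF fin[unfolded S_def] j] unfolding S_def .
      have "peval n (du j (P k)) u * peval n (cubep (\<beta> j) j) u
          + peval n (dub j (P k)) u * cnj (peval n (cubep (\<beta> j) j) u)
          = (peval n (du j (P k)) u * u j) * \<beta> j * N j
            + (peval n (dub j (P k)) u * cnj (u j)) * cnj (\<beta> j) * N j"
        using j by (simp add: peval_cube N_def power2_eq_square algebra_simps)
      also have "\<dots> = (\<Sum>m\<in>S. (of_nat (fst m j) * \<beta> j + of_nat (snd m j) * cnj (\<beta> j)) * N j * R u m)"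
        unfolding e1 e2 R_def sum_distrib_right sum.distrib[symmetric] by (rule sum.cong[OF refl]) (simp add: algebra_simps)
      finally show "peval n (du j (P k)) u * peval n (cubep (\<beta> j) j) u
          + peval n (dub j (P k)) u * cnj (peval n (cubep (\<beta> j) j) u)
          = (\<Sum>m\<in>S. (of_nat (fst m j) * \<beta> j + of_nat (snd m j) * cnj (\<beta> j)) * N j * R u m)" .
    qed
    have L2: "bracket n (cubep (\<beta> k) k) P u
        = 2 * \<beta> k * N k * (\<Sum>m\<in>S. R u m) + \<beta> k * (u k)\<^sup>2 * (\<Sum>m\<in>S. cnj (R u m))"
    proof -
      have "bracket n (cubep (\<beta> k) k) P u
          = (\<Sum>j<n. if j = k then peval n (du k (cubep (\<beta> k) k)) u * peval n (P k) u
               + peval n (dub k (cubep (\<beta> k) k)) u * cnj (peval n (P k) u) else 0)"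
        unfolding bracket_def
        by (rule sum.cong[OF refl]) (auto simp: du_cube_other dub_cube_other peval_zero)
      also have "\<dots> = peval n (du k (cubep (\<beta> k) k)) u * peval n (P k) u
               + peval n (dub k (cubep (\<beta> k) k)) u * cnj (peval n (P k) u)"
        using k by simp
      also have "\<dots> = 2 * \<beta> k * N k * (\<Sum>m\<in>S. R u m) + \<beta> k * (u k)\<^sup>2 * (\<Sum>m\<in>S. cnj (R u m))"
        unfolding du_cube_k dub_cube_k peval_single PK using k
        by (simp add: mon_single N_def)
      finally show ?thesis .
    qed
    have RHS: "(\<Sum>m\<in>{m. P k m \<noteq> 0}.
              bb m * (u k)\<^sup>2 * cnj (P k m * mon_eval n m u)
              + (\<Sum>j<n. a m j * complex_of_real ((cmod (u j))\<^sup>2) * (P k m * mon_eval n m u)))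
        = (\<Sum>j<n. \<Sum>m\<in>S. (of_nat (fst m j) * \<beta> j + of_nat (snd m j) * cnj (\<beta> j)) * N j * R u m)
          - (2 * \<beta> k * N k * (\<Sum>m\<in>S. R u m) + \<beta> k * (u k)\<^sup>2 * (\<Sum>m\<in>S. cnj (R u m)))"
    proof -
      have inner: "(\<Sum>j<n. a m j * N j * R u m)
          = (\<Sum>j<n. (of_nat (fst m j) * \<beta> j + of_nat (snd m j) * cnj (\<beta> j)) * N j * R u m)
            - 2 * \<beta> k * N k * R u m" for m
      proof -
        have "(\<Sum>j<n. a m j * N j * R u m)
            = (\<Sum>j<n. (of_nat (fst m j) * \<beta> j + of_nat (snd m j) * cnj (\<beta> j)) * N j * R u m
                 - (if j = k then 2 * \<beta> k * N k * R u m else 0))"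
          unfolding a_def by (rule sum.cong[OF refl]) (auto simp: algebra_simps)
        also have "\<dots> = (\<Sum>j<n. (of_nat (fst m j) * \<beta> j + of_nat (snd m j) * cnj (\<beta> j)) * N j * R u m)
            - 2 * \<beta> k * N k * R u m"
          using k by (simp add: sum_subtractf)
        finally show ?thesis .
      qed
      have "(\<Sum>m\<in>{m. P k m \<noteq> 0}.
              bb m * (u k)\<^sup>2 * cnj (P k m * mon_eval n m u)
              + (\<Sum>j<n. a m j * complex_of_real ((cmod (u j))\<^sup>2) * (P k m * mon_eval n m u)))
          = (\<Sum>m\<in>S. (\<Sum>j<n. (of_nat (fst m j) * \<beta> j + of_nat (snd m j) * cnj (\<beta> j)) * N j * R u m)
              - (2 * \<beta> k * N k * R u m + \<beta> k * (u k)\<^sup>2 * cnj (R u m)))"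
        unfolding S_def[symmetric] Nc R_def[symmetric]
        by (rule sum.cong[OF refl]) (simp only: inner, simp add: bb_def algebra_simps)
      also have "\<dots> = (\<Sum>m\<in>S. \<Sum>j<n. (of_nat (fst m j) * \<beta> j + of_nat (snd m j) * cnj (\<beta> j)) * N j * R u m)
          - (2 * \<beta> k * N k * (\<Sum>m\<in>S. R u m) + \<beta> k * (u k)\<^sup>2 * (\<Sum>m\<in>S. cnj (R u m)))"
        by (simp add: sum_subtractf sum.distrib sum_distrib_left)
      also have "(\<Sum>m\<in>S. \<Sum>j<n. (of_nat (fst m j) * \<beta> j + of_nat (snd m j) * cnj (\<beta> j)) * N j * R u m)
          = (\<Sum>j<n. \<Sum>m\<in>S. (of_nat (fst m j) * \<beta> j + of_nat (snd m j) * cnj (\<beta> j)) * N j * R u m)"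
        by (rule sum.swap)
      finally show ?thesis .
    qed
    show "bracket n (P k) (\<lambda>j. cubep (\<beta> j) j) u - bracket n (cubep (\<beta> k) k) P u
         = (\<Sum>m\<in>{m. P k m \<noteq> 0}.
              bb m * (u k)\<^sup>2 * cnj (P k m * mon_eval n m u)
              + (\<Sum>j<n. a m j * complex_of_real ((cmod (u j))\<^sup>2) * (P k m * mon_eval n m u)))"
      unfolding RHS L1 L2 ..
  qed
qed

end
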